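(* Let $(X,d)$ be a compact metric space whose open balls are connected, $\lambda\in(0,1)$, $U\subset\mathbb{R}^M$ of positive Lebesgue measure, $\{f_\mu\}_{\mu\in U}$ a family of piecewise $\lambda$-contractions on $X$, and $\mu^*\in U$. If $\{\mathscr{C}^{(n)}_\mu\}_{\mu\in U}$ is stable at $\mu^*$ for every $n\ge1$ and $H_{\mathrm{mult}}(f_{\mu^*})=0$, then $\{f_\mu\}_{\mu\in U}$ satisfies Hypothesis (E) at $\mu^*$.
   Context: A piecewise $\lambda$-contraction $f\colon X\to X$: there exist $N\in\mathbb{N}$, open connected pairwise disjoint $A_1,\dots,A_N\subset X$ with dense union $X'$, and bi-Lipschitz $\varphi_i\colon X\to X$ with Lipschitz constant $\le\lambda$ and $f|_{A_i}=\varphi_i|_{A_i}$; $S(f)=X\setminus X'$. A family $\{f_\mu\}_{\mu\in U}$: each $f_\mu$ is such a map with the same label set $\mathcal{A}=\{1,\dots,N\}$, partition $\{A_{i,\mu}\}$ and maps $\{\varphi_{i,\mu}\}$. A point $x$ is regular of order $n$ for $f_\mu$ if $f_\mu^j(x)\notin S(f_\mu)$ for $0\le j<n$; its itinerary of order $n$ is $(i_0,\dots,i_{n-1})$ with $f_\mu^j(x)\in A_{i_j,\mu}$; $\mathcal{I}_n(f_\mu)$ is the set of such itineraries. $\mathscr{C}^{(1)}_\mu=\{A_{i,\mu}\}_{i\in\mathcal{A}}$, and for $n\ge2$, $\mathscr{C}^{(n)}_\mu$ is the collection of the nonempty sets $A^\alpha_\mu=A_{i_0,\mu}\cap\varphi_{i_0,\mu}^{-1}(A_{i_1,\mu})\cap\cdots\cap(\varphi_{i_{n-2},\mu}\circ\cdots\circ\varphi_{i_0,\mu})^{-1}(A_{i_{n-1},\mu})$,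 $\alpha=(i_0,\dots,i_{n-1})\in\mathcal{A}^n$. For a finite collection $\mathscr{C}$ of subsets of $X$, $\mathrm{mult}(\mathscr{C})=\max_{x\in X}\#\{A\in\mathscr{C}:x\in\overline A\}$. $H_{\mathrm{mult}}(f_\mu)=\limsup_{n\to\infty}\frac1n\log\mathrm{mult}(\mathscr{C}^{(n)}_\mu)$. Let $U_\delta(\mu^* )=U\cap B_\delta(\mu^* )$. For fixed $n$, $\{\mathscr{C}^{(n)}_\mu\}_{\mu\in U}$ is stable at $\mu^*$ if there is $\delta>0$ with (i) $\mathcal{I}_n(f_\mu)=\mathcal{I}_n(f_{\mu^*})$ for all $\mu\in U_\delta(\mu^* )$, and (ii) $d_H(A^\alpha_\mu,A^\alpha_{\mu^*})\to0$ as $\mu\to\mu^*$ for every $\alpha\in\mathcal{I}_n(f_{\mu^*})$, where $d_H$ is the Hausdorff distance. Hypothesis (E) at $\mu^*$: $\lim_{\delta\to0^+}\limsup_{n\to\infty}\frac1n\log\#\mathcal{J}_n^\delta(\mu^* )=0$, where $\mathcal{J}_n^\delta(\mu^* )=\bigcup_{\mu\in U_\delta(\mu^* )}\mathcal{I}_n(f_\mu)$. *)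

theory Defs
  imports "HOL-Analysis.Analysis"
begin

definition hausdorff_dist :: "'a::metric_space set \<Rightarrow> 'a set \<Rightarrow> real" where
  "hausdorff_dist A B = max (SUP a\<in>A. infdist a B) (SUP b\<in>B. infdist b A)"

definition bilip_contr :: "'a::metric_space set \<Rightarrow> real \<Rightarrow> ('a \<Rightarrow> 'a) \<Rightarrow> bool" where
  "bilip_contr X lam g \<longleftrightarrow> g ` X \<subseteq> X \<and> lam-lipschitz_on X g \<and>
     (\<exists>c>0. \<forall>x\<in>X. \<forall>y\<in>X. c * dist x y \<le> dist (g x) (g y))"

definition pw_contraction ::
  "'a::metric_space set \<Rightarrow> real \<Rightarrow> nat \<Rightarrow> (nat \<Rightarrow> 'a set) \<Rightarrow> (nat \<Rightarrow> 'a \<Rightarrow> 'a) \<Rightarrow> ('a \<Rightarrow> 'a) \<Rightarrow> bool"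
  where
  "pw_contraction X lam N A phi f \<longleftrightarrow>
     f ` X \<subseteq> X \<and>
     (\<forall>i\<in>{1..N}. A i \<subseteq> X \<and> openin (top_of_set X) (A i) \<and> connected (A i)) \<and>
     (\<forall>i\<in>{1..N}. \<forall>j\<in>{1..N}. i \<noteq> j \<longrightarrow> A i \<inter> A j = {}) \<and>
     X \<subseteq> closure (\<Union>i\<in>{1..N}. A i) \<and>
     (\<forall>i\<in>{1..N}. bilip_contr X lam (phi i)) \<and>
     (\<forall>i\<in>{1..N}. \<forall>x\<in>A i. f x = phi i x)"

definition sing_set :: "'a set \<Rightarrow> nat \<Rightarrow> (nat \<Rightarrow> 'a set) \<Rightarrow> 'a set" where
  "sing_set X N A = X - (\<Union>i\<in>{1..N}. A i)"

definition itineraries ::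
  "'a set \<Rightarrow> nat \<Rightarrow> (nat \<Rightarrow> 'a set) \<Rightarrow> ('a \<Rightarrow> 'a) \<Rightarrow> nat \<Rightarrow> nat list set" where
  "itineraries X N A f n = {\<alpha>. length \<alpha> = n \<and> set \<alpha> \<subseteq> {1..N} \<and>
     (\<exists>x\<in>X. (\<forall>j<n. (f ^^ j) x \<notin> sing_set X N A) \<and> (\<forall>j<n. (f ^^ j) x \<in> A (\<alpha> ! j)))}"

text \<open>Cylinder A^alpha = A_{i0} \<inter> phi_{i0}^{-1}(A_{i1}) \<inter> ... ; the composition
  phi_{i_{j-1}} o ... o phi_{i_0} is fold over the first j labels.\<close>
definition cylinder :: "(nat \<Rightarrow> 'a set) \<Rightarrow> (nat \<Rightarrow> 'a \<Rightarrow> 'a) \<Rightarrow> nat list \<Rightarrow> 'a set" where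
  "cylinder A phi \<alpha> = {x. \<forall>j<length \<alpha>. fold phi (take j \<alpha>) x \<in> A (\<alpha> ! j)}"

definition cyl_coll :: "nat \<Rightarrow> (nat \<Rightarrow> 'a set) \<Rightarrow> (nat \<Rightarrow> 'a \<Rightarrow> 'a) \<Rightarrow> nat \<Rightarrow> 'a set set" where
  "cyl_coll N A phi n = {cylinder A phi \<alpha> | \<alpha>. length \<alpha> = n \<and> set \<alpha> \<subseteq> {1..N} \<and> cylinder A phi \<alpha> \<noteq> {}}"

definition mult :: "'a::topological_space set \<Rightarrow> 'a set set \<Rightarrow> nat" where
  "mult X C = (SUP x\<in>X. card {B\<in>C. x \<in> closure B})"

definition H_mult :: "'a::metric_space set \<Rightarrow> nat \<Rightarrow> (nat \<Rightarrow> 'a set) \<Rightarrow> (nat \<Rightarrow> 'a \<Rightarrow> 'a) \<Rightarrow> ereal" where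
  "H_mult X N A phi = limsup (\<lambda>n. ereal (ln (real (mult X (cyl_coll N A phi n))) / real n))"

definition stable_at ::
  "'a::metric_space set \<Rightarrow> 'm::metric_space set \<Rightarrow> nat \<Rightarrow> ('m \<Rightarrow> nat \<Rightarrow> 'a set) \<Rightarrow>
   ('m \<Rightarrow> nat \<Rightarrow> 'a \<Rightarrow> 'a) \<Rightarrow> ('m \<Rightarrow> 'a \<Rightarrow> 'a) \<Rightarrow> nat \<Rightarrow> 'm \<Rightarrow> bool" where
  "stable_at X U N A phi f n \<mu>0 \<longleftrightarrow>
     (\<exists>\<delta>>0. (\<forall>\<mu>\<in>U \<inter> ball \<mu>0 \<delta>. itineraries X N (A \<mu>) (f \<mu>) n = itineraries X N (A \<mu>0) (f \<mu>0) n) \<and>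
       (\<forall>\<alpha>\<in>itineraries X N (A \<mu>0) (f \<mu>0) n.
          ((\<lambda>\<mu>. hausdorff_dist (cylinder (A \<mu>) (phi \<mu>) \<alpha>) (cylinder (A \<mu>0) (phi \<mu>0) \<alpha>)) \<longlongrightarrow> 0)
            (at \<mu>0 within U)))"

definition J_set ::
  "'a set \<Rightarrow> 'm::metric_space set \<Rightarrow> nat \<Rightarrow> ('m \<Rightarrow> nat \<Rightarrow> 'a set) \<Rightarrow> ('m \<Rightarrow> 'a \<Rightarrow> 'a) \<Rightarrow>
   real \<Rightarrow> 'm \<Rightarrow> nat \<Rightarrow> nat list set" where
  "J_set X U N A f \<delta> \<mu>0 n = (\<Union>\<mu>\<in>U \<inter> ball \<mu>0 \<delta>. itineraries X N (A \<mu>) (f \<mu>) n)"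

definition hypothesis_E ::
  "'a set \<Rightarrow> 'm::metric_space set \<Rightarrow> nat \<Rightarrow> ('m \<Rightarrow> nat \<Rightarrow> 'a set) \<Rightarrow> ('m \<Rightarrow> 'a \<Rightarrow> 'a) \<Rightarrow> 'm \<Rightarrow> bool" where
  "hypothesis_E X U N A f \<mu>0 \<longleftrightarrow>
     ((\<lambda>\<delta>. limsup (\<lambda>n. ereal (ln (real (card (J_set X U N A f \<delta> \<mu>0 n))) / real n)))
        \<longlongrightarrow> 0) (at_right 0)"

end

theory Submission
  imports Defs
begin


lemma pwD:
  assumes "pw_contraction X lam N A phi f"
  shows "f ` X \<subseteq> X" "\<And>i. i \<in> {1..N} \<Longrightarrow> A i \<subseteq> X"
    "\<And>i j. i \<in> {1..N} \<Longrightarrow> j \<in> {1..N} \<Longrightarrow> i \<noteq> j \<Longrightarrow> A i \<inter> A j = {}"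
    "\<And>i. i \<in> {1..N} \<Longrightarrow> phi i ` X \<subseteq> X"
    "\<And>i. i \<in> {1..N} \<Longrightarrow> lam-lipschitz_on X (phi i)"
    "\<And>i x. i \<in> {1..N} \<Longrightarrow> x \<in> A i \<Longrightarrow> f x = phi i x"
  using assms unfolding pw_contraction_def bilip_contr_def by simp_all

lemma funpow_in:
  assumes "f ` X \<subseteq> X" "x \<in> X" shows "(f ^^ n) x \<in> X"
  using assms by (induction n) auto

lemma itin_iff:
  assumes "pw_contraction X lam N A phi f"
  shows "\<alpha> \<in> itineraries X N A f n \<longleftrightarrow> length \<alpha> = n \<and> set \<alpha> \<subseteq> {1..N} \<and>
     (\<exists>x\<in>X. \<forall>j<n. (f ^^ j) x \<in> A (\<alpha> ! j))"
proof -
  have "(f ^^ j) x \<notin> sing_set X N A" if "set \<alpha> \<subseteq> {1..N}" "length \<alpha> = n" "j < n" "(f ^^ j) x \<in> A (\<alpha> ! j)" for x j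
  proof -
    have "\<alpha> ! j \<in> {1..N}" using that(1) nth_mem[of j \<alpha>] that(2,3) by blast
    then show ?thesis using that unfolding sing_set_def by auto
  qed
  then show ?thesis unfolding itineraries_def by blast
qed

lemma fold_in:
  assumes "pw_contraction X lam N A phi f" "x \<in> X" "set \<alpha> \<subseteq> {1..N}"
  shows "fold phi \<alpha> x \<in> X"
  using assms(2,3)
proof (induction \<alpha> arbitrary: x)
  case (Cons a \<alpha>)
  then have "phi a x \<in> X" using pwD(4)[OF assms(1)] by auto
  then show ?case using Cons by auto
qed simp

lemma fold_contr:
  assumes "pw_contraction X lam N A phi f" "x \<in> X" "y \<in> X" "set \<alpha> \<subseteq> {1..N}"
  shows "dist (fold phi \<alpha> x) (fold phi \<alpha> y) \<le> lam ^ length \<alpha> * dist x y"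
  using assms(2-4)
proof (induction \<alpha> arbitrary: x y)
  case (Cons a \<alpha>)
  have a: "a \<in> {1..N}" using Cons by auto
  then have xy: "phi a x \<in> X" "phi a y \<in> X" using pwD(4)[OF assms(1)] Cons by auto
  have l: "lam-lipschitz_on X (phi a)" using pwD(5)[OF assms(1) a] .
  have "dist (phi a x) (phi a y) \<le> lam * dist x y" using lipschitz_onD[OF l Cons(2,3)] .
  moreover have "0 \<le> lam" using l lipschitz_on_nonneg by blast
  ultimately have "lam ^ length \<alpha> * dist (phi a x) (phi a y) \<le> lam ^ length \<alpha> * (lam * dist x y)"
    by (simp add: mult_left_mono)
  then show ?case using Cons.IH[OF xy] Cons by (simp add: algebra_simps)
qed simp

lemma iter_fold:
  assumes "pw_contraction X lam N A phi f" "set \<alpha> \<subseteq> {1..N}"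
    "\<forall>j<length \<alpha>. (f ^^ j) x \<in> A (\<alpha> ! j)" "k \<le> length \<alpha>"
  shows "(f ^^ k) x = fold phi (take k \<alpha>) x"
  using assms(4)
proof (induction k)
  case (Suc k)
  then have k: "k < length \<alpha>" by simp
  have "\<alpha> ! k \<in> {1..N}" using assms(2) k nth_mem by blast
  moreover have "(f ^^ k) x \<in> A (\<alpha> ! k)" using assms(3) k by blast
  ultimately have "(f ^^ Suc k) x = phi (\<alpha> ! k) ((f ^^ k) x)" using pwD(6)[OF assms(1)] by simp
  then show ?case using Suc k by (simp add: take_Suc_conv_app_nth)
qed simp

lemma itin_cyl:
  assumes "pw_contraction X lam N A phi f" "set \<alpha> \<subseteq> {1..N}"
    "\<forall>j<length \<alpha>. (f ^^ j) x \<in> A (\<alpha> ! j)"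
  shows "x \<in> cylinder A phi \<alpha>"
  unfolding cylinder_def
proof (intro CollectI allI impI)
  fix j assume j: "j < length \<alpha>"
  have "(f ^^ j) x = fold phi (take j \<alpha>) x" using iter_fold[OF assms, of j] j by simp
  moreover have "(f ^^ j) x \<in> A (\<alpha> ! j)" using assms(3) j by blast
  ultimately show "fold phi (take j \<alpha>) x \<in> A (\<alpha> ! j)" by simp
qed

lemma itin_split:
  assumes pw: "pw_contraction X lam N A phi f" and g: "\<gamma> \<in> itineraries X N A f (a + b)"
  shows "take a \<gamma> \<in> itineraries X N A f a" "drop a \<gamma> \<in> itineraries X N A f b"
proof -
  have gg: "length \<gamma> = a + b \<and> set \<gamma> \<subseteq> {1..N} \<and> (\<exists>x\<in>X. \<forall>j<a+b. (f ^^ j) x \<in> A (\<gamma> ! j))"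
    using g itin_iff[OF pw] by simp
  then obtain x where x1: "x \<in> X" and x2: "\<forall>j<a+b. (f ^^ j) x \<in> A (\<gamma> ! j)" 
    by blast
  have l: "length \<gamma> = a + b" and s: "set \<gamma> \<subseteq> {1..N}" using gg by simp_all
  have s1: "set (take a \<gamma>) \<subseteq> {1..N}" using s set_take_subset by (metis order_trans)
  have s2: "set (drop a \<gamma>) \<subseteq> {1..N}" using s set_drop_subset by (metis order_trans)
  have t: "\<forall>j<a. (f ^^ j) x \<in> A (take a \<gamma> ! j)" using x2 by simp
  have d: "\<forall>j<b. (f ^^ j) ((f ^^ a) x) \<in> A (drop a \<gamma> ! j)"
  proof (intro allI impI)
    fix j assume jb: "j < b"
    then have "(f ^^ (j + a)) x \<in> A (\<gamma> ! (j + a))" using x2 by simp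
    moreover have "(f ^^ (j + a)) x = (f ^^ j) ((f ^^ a) x)" by (simp add: funpow_add)
    moreover have "\<gamma> ! (j + a) = drop a \<gamma> ! j" using l jb by (simp add: add.commute)
    ultimately show "(f ^^ j) ((f ^^ a) x) \<in> A (drop a \<gamma> ! j)" by simp
  qed
  have fx: "(f ^^ a) x \<in> X" using funpow_in[OF pwD(1)[OF pw] x1] .
  have "length (take a \<gamma>) = a" "length (drop a \<gamma>) = b" using l by simp_all
  then show "take a \<gamma> \<in> itineraries X N A f a" "drop a \<gamma> \<in> itineraries X N A f b"
    unfolding itin_iff[OF pw] using s1 s2 t d x1 fx by blast+
qed

lemma itin_finite: "itineraries X N A f n \<subseteq> {xs. set xs \<subseteq> {1..N} \<and> length xs = n}"
  unfolding itineraries_def by auto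

lemma itin_card: "card (itineraries X N A f n) \<le> N ^ n"
  using card_mono[OF finite_lists_length_eq[of "{1..N}" n] itin_finite[of X N A f n]]
  by (simp add: card_lists_length_eq)



lemma leb:
  assumes "compact X" "finite C"
  shows "\<exists>r>0. \<forall>p\<in>X. card {B\<in>C. B \<inter> ball p r \<noteq> {}} \<le> mult X C"
proof -
  define G where "G x = - (\<Union>B\<in>{B\<in>C. x \<notin> closure B}. closure B)" for x
  have opn: "open (G x)" for x
    unfolding G_def using assms(2) by (intro open_Compl closed_UN) auto
  have xG: "x \<in> G x" for x by (auto simp: G_def)
  have "X \<subseteq> \<Union>(G ` X)" using xG by blast
  then obtain e where e: "0 < e" "\<And>x. x \<in> X \<Longrightarrow> \<exists>g\<in>G ` X. ball x e \<subseteq> g"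
    using Heine_Borel_lemma[OF assms(1), of "G ` X"] opn by blast
  have bdd: "bdd_above ((\<lambda>x. card {B\<in>C. x \<in> closure B}) ` X)"
    using assms(2) by (intro bdd_aboveI[of _ "card C"]) (auto intro!: card_mono)
  have "card {B\<in>C. B \<inter> ball p e \<noteq> {}} \<le> mult X C" if p: "p \<in> X" for p
  proof -
    obtain x where x: "x \<in> X" "ball p e \<subseteq> G x" using e(2)[OF p] by blast
    have "{B\<in>C. B \<inter> ball p e \<noteq> {}} \<subseteq> {B\<in>C. x \<in> closure B}"
    proof safe
      fix B y assume B: "B \<in> C" "y \<in> B" "y \<in> ball p e"
      show "x \<in> closure B"
      proof (rule ccontr)
        assume "x \<notin> closure B"
        then have "y \<notin> G x" using B closure_subset unfolding G_def by blast
        then show False using B x by blast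
      qed
    qed
    then have "card {B\<in>C. B \<inter> ball p e \<noteq> {}} \<le> card {B\<in>C. x \<in> closure B}"
      using assms(2) by (intro card_mono) auto
    also have "\<dots> \<le> mult X C" unfolding mult_def using cSUP_upper[OF x(1) bdd] .
    finally show ?thesis .
  qed
  then show ?thesis using e(1) by blast
qed

lemma cyl_inj:
  assumes pw: "pw_contraction X lam N A phi f" and l: "length \<beta> = length \<beta>'"
    and s: "set \<beta> \<subseteq> {1..N}" "set \<beta>' \<subseteq> {1..N}"
    and y: "y \<in> cylinder A phi \<beta>" "y \<in> cylinder A phi \<beta>'"
  shows "\<beta> = \<beta>'"
proof -
  have "j < length \<beta> \<longrightarrow> \<beta> ! j = \<beta>' ! j" for j
  proof (induction j rule: less_induct)
    case (less j)
    show ?case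
    proof
      assume j: "j < length \<beta>"
      have "take j \<beta> = take j \<beta>'"
        using less j l by (intro nth_equalityI) auto
      moreover have "fold phi (take j \<beta>) y \<in> A (\<beta> ! j)" using y(1) j unfolding cylinder_def by blast
      moreover have "fold phi (take j \<beta>') y \<in> A (\<beta>' ! j)" using y(2) j l unfolding cylinder_def by auto
      moreover have "\<beta> ! j \<in> {1..N}" using s(1) j nth_mem by blast
      moreover have "\<beta>' ! j \<in> {1..N}" using s(2) j l nth_mem by (metis subsetD)
      ultimately show "\<beta> ! j = \<beta>' ! j" using pwD(3)[OF pw] by fastforce
    qed
  qed
  then show ?thesis using l by (intro nth_equalityI) auto
qed

lemma cyl_coll_finite: "finite (cyl_coll N A phi m)"
proof -
  have "cyl_coll N A phi m \<subseteq> cylinder A phi ` {xs. set xs \<subseteq> {1..N} \<and> length xs = m}"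
    unfolding cyl_coll_def by blast
  then show ?thesis by (rule finite_subset[OF _ finite_imageI[OF finite_lists_length_eq]]) simp
qed



lemma step:
  assumes pw: "pw_contraction X lam N A phi f" and lam0: "0 \<le> lam"
    and r: "\<forall>p\<in>X. card {B\<in>cyl_coll N A phi m. B \<inter> ball p r \<noteq> {}} \<le> M"
    and D: "\<forall>x\<in>X. \<forall>y\<in>X. dist x y \<le> D" and small: "lam ^ n * D < r"
  shows "card (itineraries X N A f (n + m)) \<le> card (itineraries X N A f n) * M"
proof -
  let ?I = "itineraries X N A f"
  define E where "E \<alpha> = {\<beta>. \<alpha> @ \<beta> \<in> ?I (n + m)}" for \<alpha>
  have finI: "finite (?I k)" for k
    by (rule finite_subset[OF itin_finite finite_lists_length_eq]) simp
  have sub: "?I (n + m) \<subseteq> (\<Union>\<alpha>\<in>?I n. (\<lambda>\<beta>. \<alpha> @ \<beta>) ` E \<alpha>)"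
  proof
    fix \<gamma> assume g: "\<gamma> \<in> ?I (n + m)"
    have "take n \<gamma> \<in> ?I n" using itin_split(1)[OF pw g] .
    moreover have "drop n \<gamma> \<in> E (take n \<gamma>)" unfolding E_def using g by simp
    ultimately show "\<gamma> \<in> (\<Union>\<alpha>\<in>?I n. (\<lambda>\<beta>. \<alpha> @ \<beta>) ` E \<alpha>)"
      by (metis (no_types, lifting) UN_iff append_take_drop_id image_eqI)
  qed
  have finE: "finite (E \<alpha>)" for \<alpha>
  proof -
    have "E \<alpha> \<subseteq> drop (length \<alpha>) ` ?I (n + m)" unfolding E_def
    proof
      fix \<beta> assume "\<beta> \<in> {\<beta>. \<alpha> @ \<beta> \<in> ?I (n + m)}"
      then show "\<beta> \<in> drop (length \<alpha>) ` ?I (n + m)" by (intro image_eqI[of _ _ "\<alpha> @ \<beta>"]) auto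
    qed
    then show ?thesis using finI finite_subset by blast
  qed
  have cardE: "card (E \<alpha>) \<le> M" if \<alpha>: "\<alpha> \<in> ?I n" for \<alpha>
  proof (cases "E \<alpha> = {}")
    case True then show ?thesis by simp
  next
    case False
    have la: "length \<alpha> = n" and sa: "set \<alpha> \<subseteq> {1..N}" using \<alpha> itin_iff[OF pw] by auto
    have ex: "\<exists>x. x \<in> X \<and> (\<forall>j<n+m. (f ^^ j) x \<in> A ((\<alpha> @ \<beta>) ! j))" if "\<beta> \<in> E \<alpha>" for \<beta>
      using that itin_iff[OF pw] unfolding E_def by blast
    define pt where "pt \<beta> = (SOME x. x \<in> X \<and> (\<forall>j<n+m. (f ^^ j) x \<in> A ((\<alpha> @ \<beta>) ! j)))" for \<beta>
    have pt: "pt \<beta> \<in> X" "\<forall>j<n+m. (f ^^ j) (pt \<beta>) \<in> A ((\<alpha> @ \<beta>) ! j)" if "\<beta> \<in> E \<alpha>" for \<beta>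
      using someI_ex[OF ex[OF that]] unfolding pt_def by blast+
    have lb: "length \<beta> = m" and sb: "set \<beta> \<subseteq> {1..N}" if "\<beta> \<in> E \<alpha>" for \<beta>
      using that itin_iff[OF pw] la unfolding E_def by auto
    have fold_eq: "(f ^^ n) (pt \<beta>) = fold phi \<alpha> (pt \<beta>)" if b: "\<beta> \<in> E \<alpha>" for \<beta>
    proof -
      have "set (\<alpha> @ \<beta>) \<subseteq> {1..N}" using sa sb[OF b] by simp
      moreover have "\<forall>j<length (\<alpha> @ \<beta>). (f ^^ j) (pt \<beta>) \<in> A ((\<alpha> @ \<beta>) ! j)"
        using pt(2)[OF b] la lb[OF b] by simp
      moreover have "n \<le> length (\<alpha> @ \<beta>)" using la by simp
      ultimately have "(f ^^ n) (pt \<beta>) = fold phi (take n (\<alpha> @ \<beta>)) (pt \<beta>)"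
        by (rule iter_fold[OF pw])
      then show ?thesis using la by simp
    qed
    have incyl: "(f ^^ n) (pt \<beta>) \<in> cylinder A phi \<beta>" if b: "\<beta> \<in> E \<alpha>" for \<beta>
    proof (rule itin_cyl[OF pw sb[OF b]], intro allI impI)
      fix j assume j: "j < length \<beta>"
      then have "(f ^^ (j + n)) (pt \<beta>) \<in> A ((\<alpha> @ \<beta>) ! (j + n))" using pt(2)[OF b] lb[OF b] by simp
      then show "(f ^^ j) ((f ^^ n) (pt \<beta>)) \<in> A (\<beta> ! j)" using la by (simp add: funpow_add nth_append)
    qed
    obtain \<beta>0 where b0: "\<beta>0 \<in> E \<alpha>" using False by blast
    define p where "p = (f ^^ n) (pt \<beta>0)"
    have pX: "p \<in> X" unfolding p_def using funpow_in[OF pwD(1)[OF pw] pt(1)[OF b0]] .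
    have img: "cylinder A phi ` E \<alpha> \<subseteq> {B\<in>cyl_coll N A phi m. B \<inter> ball p r \<noteq> {}}"
    proof
      fix B assume "B \<in> cylinder A phi ` E \<alpha>"
      then obtain \<beta> where b: "\<beta> \<in> E \<alpha>" and B: "B = cylinder A phi \<beta>" by blast
      have y: "(f ^^ n) (pt \<beta>) \<in> B" using incyl[OF b] B by simp
      have "dist p ((f ^^ n) (pt \<beta>)) = dist (fold phi \<alpha> (pt \<beta>0)) (fold phi \<alpha> (pt \<beta>))"
        unfolding p_def fold_eq[OF b0] fold_eq[OF b] ..
      also have "\<dots> \<le> lam ^ length \<alpha> * dist (pt \<beta>0) (pt \<beta>)"
        by (rule fold_contr[OF pw pt(1)[OF b0] pt(1)[OF b] sa])
      also have "\<dots> \<le> lam ^ n * D" using la D pt(1)[OF b0] pt(1)[OF b] lam0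
        by (simp add: mult_left_mono)
      also have "\<dots> < r" by (rule small)
      finally have "(f ^^ n) (pt \<beta>) \<in> ball p r" by simp
      moreover have "B \<in> cyl_coll N A phi m" unfolding cyl_coll_def using y B lb[OF b] sb[OF b] by blast
      ultimately show "B \<in> {B\<in>cyl_coll N A phi m. B \<inter> ball p r \<noteq> {}}" using y by blast
    qed
    have inj: "inj_on (cylinder A phi) (E \<alpha>)"
    proof (rule inj_onI)
      fix \<beta> \<beta>' assume b: "\<beta> \<in> E \<alpha>" "\<beta>' \<in> E \<alpha>" "cylinder A phi \<beta> = cylinder A phi \<beta>'"
      show "\<beta> = \<beta>'"
        by (rule cyl_inj[OF pw _ sb[OF b(1)] sb[OF b(2)] incyl[OF b(1)]])
           (use b lb incyl[OF b(1)] in auto)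
    qed
    have "card (E \<alpha>) = card (cylinder A phi ` E \<alpha>)" using card_image[OF inj] by simp
    also have "\<dots> \<le> card {B\<in>cyl_coll N A phi m. B \<inter> ball p r \<noteq> {}}"
      by (rule card_mono[OF _ img]) (simp add: cyl_coll_finite)
    also have "\<dots> \<le> M" using r pX by blast
    finally show ?thesis .
  qed
  have "card (?I (n + m)) \<le> card (\<Union>\<alpha>\<in>?I n. (\<lambda>\<beta>. \<alpha> @ \<beta>) ` E \<alpha>)"
    by (rule card_mono[OF _ sub]) (use finI finE in blast)
  also have "\<dots> \<le> (\<Sum>\<alpha>\<in>?I n. card ((\<lambda>\<beta>. \<alpha> @ \<beta>) ` E \<alpha>))" by (rule card_UN_le[OF finI])
  also have "\<dots> \<le> (\<Sum>\<alpha>\<in>?I n. M)"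
    by (rule sum_mono) (metis cardE card_image_le finE order_trans)
  also have "\<dots> = card (?I n) * M" by simp
  finally show ?thesis .
qed



lemma ln_nat_nonneg: "0 \<le> ln (real (n::nat))"
  by (cases "n = 0") auto

lemma iterate:
  assumes "\<forall>n\<ge>n0. card (I (n + m)) \<le> card (I n) * (M::nat)"
  shows "card (I (n0 + k * m)) \<le> card (I n0) * M ^ k"
proof (induction k)
  case (Suc k)
  have "card (I (n0 + Suc k * m)) = card (I ((n0 + k * m) + m))" by (simp add: algebra_simps)
  also have "\<dots> \<le> card (I (n0 + k * m)) * M" using assms by simp
  also have "\<dots> \<le> card (I n0) * M ^ k * M" using Suc by simp
  finally show ?case by (simp add: algebra_simps)
qed simp

lemma ln_bound:
  assumes "c \<le> a ^ p * b ^ q"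
  shows "ln (real c) \<le> real p * ln (real a) + real q * ln (real b)"
proof (cases "c = 0")
  case True then show ?thesis using ln_nat_nonneg[of a] ln_nat_nonneg[of b] by simp
next
  case False
  then have pos: "0 < a ^ p * b ^ q" using assms by linarith
  then have "a ^ p > 0" "b ^ q > 0" by (simp_all add: zero_less_mult_iff)
  then have ab: "p = 0 \<or> a > 0" "q = 0 \<or> b > 0" by (auto simp: zero_less_power_eq)
  have cr: "real c \<le> real (a ^ p * b ^ q)" using assms by (simp only: of_nat_le_iff)
  have "ln (real c) \<le> ln (real (a ^ p * b ^ q))"
    by (rule iffD2[OF ln_le_cancel_iff cr]) (use False pos in simp_all)
  also have "\<dots> = real p * ln (real a) + real q * ln (real b)"
    using ab by (auto simp: ln_mult ln_realpow)
  finally show ?thesis .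
qed

lemma zero_growth:
  assumes pw: "pw_contraction X lam N A phi f" and cX: "compact X"
    and lam: "0 < lam" "lam < 1" and H: "H_mult X N A phi = 0" and e: "0 < \<epsilon>"
  shows "\<exists>m\<ge>1. ln (real (card (itineraries X N A f m))) / real m \<le> \<epsilon>"
proof -
  let ?I = "itineraries X N A f"
  have "limsup (\<lambda>n. ereal (ln (real (mult X (cyl_coll N A phi n))) / real n)) < ereal (\<epsilon>/2)"
    using H e unfolding H_mult_def by simp
  then have "eventually (\<lambda>n. ereal (ln (real (mult X (cyl_coll N A phi n))) / real n) < ereal (\<epsilon>/2)) sequentially"
    by (rule Limsup_lessD)
  then obtain K where K: "\<And>n. n \<ge> K \<Longrightarrow> ln (real (mult X (cyl_coll N A phi n))) / real n < \<epsilon>/2"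
    unfolding eventually_sequentially by auto
  define m where "m = max K 1"
  define M where "M = mult X (cyl_coll N A phi m)"
  have m1: "m \<ge> 1" unfolding m_def by simp
  have hM: "ln (real M) / real m < \<epsilon>/2" unfolding M_def using K[of m] m_def by simp
  obtain r where r: "r > 0" "\<forall>p\<in>X. card {B\<in>cyl_coll N A phi m. B \<inter> ball p r \<noteq> {}} \<le> M"
    using leb[OF cX cyl_coll_finite] unfolding M_def by blast
  obtain D0 where D0: "\<forall>x\<in>X. \<forall>y\<in>X. dist x y \<le> D0"
    using compact_imp_bounded[OF cX] bounded_two_points by blast
  define D where "D = max D0 1"
  have D: "\<forall>x\<in>X. \<forall>y\<in>X. dist x y \<le> D" using D0 unfolding D_def by (meson max.coboundedI1)
  have Dpos: "D > 0" unfolding D_def by simp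
  obtain n0 where n0: "lam ^ n0 < r / D" using real_arch_pow_inv[of "r / D" lam] r Dpos lam by auto
  have stp: "\<forall>n\<ge>n0. card (?I (n + m)) \<le> card (?I n) * M"
  proof (intro allI impI)
    fix n assume "n \<ge> n0"
    then have "lam ^ n \<le> lam ^ n0" using lam by (intro power_decreasing) auto
    then have "lam ^ n * D \<le> lam ^ n0 * D" using Dpos by simp
    also have "\<dots> < r" using n0 Dpos by (simp add: pos_less_divide_eq)
    finally show "card (?I (n + m)) \<le> card (?I n) * M"
      using step[OF pw _ r(2) D] lam by simp
  qed
  define k where "k = nat \<lceil>2 * real n0 * ln (real N) / (real m * \<epsilon>)\<rceil> + 1"
  have k1: "k \<ge> 1" unfolding k_def by simp
  have "real k > 2 * real n0 * ln (real N) / (real m * \<epsilon>)" unfolding k_def by linarith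
  then have "real k * (real m * \<epsilon>) > 2 * real n0 * ln (real N)"
    using m1 e by (simp add: pos_divide_less_eq)
  then have kbig: "real n0 * ln (real N) / (real k * real m) < \<epsilon> / 2"
    using m1 k1 e by (simp add: pos_divide_less_eq algebra_simps)
  define n' where "n' = n0 + k * m"
  have "card (?I n') \<le> card (?I n0) * M ^ k" unfolding n'_def by (rule iterate[OF stp])
  also have "\<dots> \<le> N ^ n0 * M ^ k" using itin_card[of X N A f n0] by simp
  finally have ab: "ln (real (card (?I n'))) \<le> real n0 * ln (real N) + real k * ln (real M)"
    by (rule ln_bound)
  have km: "real k * real m > 0" using k1 m1 by simp
  have nk: "real n' \<ge> real k * real m" unfolding n'_def by simp
  have a0: "0 \<le> ln (real (card (?I n')))" by (rule ln_nat_nonneg)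
  have "ln (real (card (?I n'))) / real n' \<le> ln (real (card (?I n'))) / (real k * real m)"
    by (rule divide_left_mono[OF nk a0]) (use km nk in simp)
  also have "\<dots> \<le> (real n0 * ln (real N) + real k * ln (real M)) / (real k * real m)"
    by (rule divide_right_mono[OF ab]) (use km in simp)
  also have "\<dots> = real n0 * ln (real N) / (real k * real m) + ln (real M) / real m"
    using k1 m1 by (simp add: add_divide_distrib)
  also have "\<dots> < \<epsilon>" using kbig hM by linarith
  finally have "ln (real (card (?I n'))) / real n' \<le> \<epsilon>" by simp
  moreover have "n' \<ge> 1" unfolding n'_def using k1 m1 by (simp add: Suc_le_eq)
  ultimately show ?thesis by blast
qed



lemma J_sub: "J_set X U N A f \<delta> \<mu>0 n \<subseteq> {xs. set xs \<subseteq> {1..N} \<and> length xs = n}"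
  unfolding J_set_def using itin_finite by blast

lemma J_fin: "finite (J_set X U N A f \<delta> \<mu>0 n)"
  by (rule finite_subset[OF J_sub finite_lists_length_eq]) simp

lemma J_count:
  assumes pw: "\<forall>\<mu>\<in>U. pw_contraction X lam N (A \<mu>) (phi \<mu>) (f \<mu>)"
    and st: "\<forall>\<mu>\<in>U \<inter> ball \<mu>0 \<delta>. itineraries X N (A \<mu>) (f \<mu>) m = itineraries X N (A \<mu>0) (f \<mu>0) m"
  shows "card (J_set X U N A f \<delta> \<mu>0 (k * m + s)) \<le> card (itineraries X N (A \<mu>0) (f \<mu>0) m) ^ k * N ^ s"
proof (induction k)
  case 0
  have "card (J_set X U N A f \<delta> \<mu>0 s) \<le> card {xs. set xs \<subseteq> {1..N} \<and> length xs = s}"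
    by (rule card_mono[OF finite_lists_length_eq J_sub]) simp
  then show ?case by (simp add: card_lists_length_eq)
next
  case (Suc k)
  let ?J = "J_set X U N A f \<delta> \<mu>0"
  let ?I0 = "itineraries X N (A \<mu>0) (f \<mu>0) m"
  have sub: "?J (Suc k * m + s) \<subseteq> (\<lambda>(a, b). a @ b) ` (?I0 \<times> ?J (k * m + s))"
  proof
    fix \<gamma> assume "\<gamma> \<in> ?J (Suc k * m + s)"
    then obtain \<mu> where mu: "\<mu> \<in> U \<inter> ball \<mu>0 \<delta>" and g: "\<gamma> \<in> itineraries X N (A \<mu>) (f \<mu>) (m + (k * m + s))"
      unfolding J_set_def by (auto simp: algebra_simps)
    have pwm: "pw_contraction X lam N (A \<mu>) (phi \<mu>) (f \<mu>)" using pw mu by blast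
    have "take m \<gamma> \<in> ?I0" using itin_split(1)[OF pwm g] st mu by blast
    moreover have "drop m \<gamma> \<in> ?J (k * m + s)" using itin_split(2)[OF pwm g] mu unfolding J_set_def by blast
    ultimately show "\<gamma> \<in> (\<lambda>(a, b). a @ b) ` (?I0 \<times> ?J (k * m + s))"
      by (intro image_eqI[of _ _ "(take m \<gamma>, drop m \<gamma>)"]) auto
  qed
  have finI0: "finite ?I0" by (rule finite_subset[OF itin_finite finite_lists_length_eq]) simp
  have "card (?J (Suc k * m + s)) \<le> card ((\<lambda>(a, b). a @ b) ` (?I0 \<times> ?J (k * m + s)))"
    by (rule card_mono[OF finite_imageI[OF finite_cartesian_product[OF finI0 J_fin]] sub])
  also have "\<dots> \<le> card (?I0 \<times> ?J (k * m + s))" by (rule card_image_le[OF finite_cartesian_product[OF finI0 J_fin]])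
  also have "\<dots> = card ?I0 * card (?J (k * m + s))" by (rule card_cartesian_product)
  also have "\<dots> \<le> card ?I0 * (card ?I0 ^ k * N ^ s)" using Suc by simp
  finally show ?case by (simp add: algebra_simps)
qed

lemma L_bound:
  assumes pw: "\<forall>\<mu>\<in>U. pw_contraction X lam N (A \<mu>) (phi \<mu>) (f \<mu>)"
    and st: "\<forall>\<mu>\<in>U \<inter> ball \<mu>0 \<delta>. itineraries X N (A \<mu>) (f \<mu>) m = itineraries X N (A \<mu>0) (f \<mu>0) m"
    and m1: "m \<ge> 1"
  shows "limsup (\<lambda>n. ereal (ln (real (card (J_set X U N A f \<delta> \<mu>0 n))) / real n))
    \<le> ereal (ln (real (card (itineraries X N (A \<mu>0) (f \<mu>0) m))) / real m)"
proof -
  let ?K = "card (itineraries X N (A \<mu>0) (f \<mu>0) m)"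
  let ?c = "ln (real ?K) / real m"
  have bnd: "ln (real (card (J_set X U N A f \<delta> \<mu>0 n))) / real n \<le> ?c + real m * ln (real N) / real n"
    if n1: "n \<ge> 1" for n
  proof -
    have nn: "n = (n div m) * m + n mod m" by simp
    have "card (J_set X U N A f \<delta> \<mu>0 n) \<le> ?K ^ (n div m) * N ^ (n mod m)"
      using J_count[OF pw st, of "n div m" "n mod m"] nn by simp
    then have "ln (real (card (J_set X U N A f \<delta> \<mu>0 n))) \<le> real (n div m) * ln (real ?K) + real (n mod m) * ln (real N)"
      by (rule ln_bound)
    also have "\<dots> \<le> real n / real m * ln (real ?K) + real m * ln (real N)"
    proof (rule add_mono)
      show "real (n div m) * ln (real ?K) \<le> real n / real m * ln (real ?K)"
        by (rule mult_right_mono[OF of_nat_div_le_of_nat ln_nat_nonneg])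
      have "n mod m \<le> m" using m1 by (meson less_imp_le mod_less_divisor zero_less_one less_le_trans)
      then show "real (n mod m) * ln (real N) \<le> real m * ln (real N)"
        by (intro mult_right_mono ln_nat_nonneg) simp
    qed
    finally have h: "ln (real (card (J_set X U N A f \<delta> \<mu>0 n))) \<le> real n / real m * ln (real ?K) + real m * ln (real N)" .
    have "ln (real (card (J_set X U N A f \<delta> \<mu>0 n))) / real n \<le> (real n / real m * ln (real ?K) + real m * ln (real N)) / real n"
      by (rule divide_right_mono[OF h]) simp
    also have "\<dots> = ?c + real m * ln (real N) / real n" using n1 m1 by (simp add: field_simps)
    finally show ?thesis .
  qed
  have "limsup (\<lambda>n. ereal (ln (real (card (J_set X U N A f \<delta> \<mu>0 n))) / real n))
      \<le> limsup (\<lambda>n. ereal (?c + real m * ln (real N) / real n))"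
    by (rule Limsup_mono) (use bnd in \<open>auto simp: eventually_sequentially\<close>)
  also have "\<dots> = ereal ?c"
  proof (rule lim_imp_Limsup)
    show "\<not> trivial_limit (sequentially :: nat filter)" by simp
    have "(\<lambda>n. ?c + real m * ln (real N) / real n) \<longlonglongrightarrow> ?c + 0"
      by (intro tendsto_add tendsto_const lim_const_over_n)
    then show "(\<lambda>n. ereal (?c + real m * ln (real N) / real n)) \<longlonglongrightarrow> ereal ?c" by simp
  qed
  finally show ?thesis .
qed

theorem proposition3p11:
  fixes X :: "'a::metric_space set" and lam :: real and U :: "'m::euclidean_space set"
    and N :: nat and A :: "'m \<Rightarrow> nat \<Rightarrow> 'a set" and phi :: "'m \<Rightarrow> nat \<Rightarrow> 'a \<Rightarrow> 'a"
    and f :: "'m \<Rightarrow> 'a \<Rightarrow> 'a" and \<mu>0 :: 'm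
  assumes "compact X"
    and "\<forall>x\<in>X. \<forall>r>0. connected (ball x r \<inter> X)"
    and "0 < lam" and "lam < 1"
    and "U \<in> sets lebesgue" and "emeasure lebesgue U > 0"
    and "\<forall>\<mu>\<in>U. pw_contraction X lam N (A \<mu>) (phi \<mu>) (f \<mu>)"
    and "\<mu>0 \<in> U"
    and "\<forall>n\<ge>1. stable_at X U N A phi f n \<mu>0"
    and "H_mult X N (A \<mu>0) (phi \<mu>0) = 0"
  shows "hypothesis_E X U N A f \<mu>0"
proof -
  note pw = assms(7)
  have pw0: "pw_contraction X lam N (A \<mu>0) (phi \<mu>0) (f \<mu>0)" using pw assms(8) by blast
  define L where "L \<delta> = limsup (\<lambda>n. ereal (ln (real (card (J_set X U N A f \<delta> \<mu>0 n))) / real n))" for \<delta>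
  have L0: "0 \<le> L \<delta>" for \<delta>
  proof -
    have "\<forall>n. (0::ereal) \<le> ereal (ln (real (card (J_set X U N A f \<delta> \<mu>0 n))) / real n)"
      by (simp add: divide_nonneg_nonneg ln_nat_nonneg)
    then have "eventually (\<lambda>n. (0::ereal) \<le> ereal (ln (real (card (J_set X U N A f \<delta> \<mu>0 n))) / real n)) sequentially"
      by (rule always_eventually)
    then show ?thesis unfolding L_def by (intro le_Limsup) simp_all
  qed
  have "(L \<longlongrightarrow> 0) (at_right 0)"
  proof (rule order_tendstoI)
    fix a :: ereal assume "a < 0"
    then show "eventually (\<lambda>\<delta>. a < L \<delta>) (at_right 0)"
      using L0 by (intro always_eventually) (meson less_le_trans)
  next
    fix a :: ereal assume "0 < a"
    then obtain \<epsilon> where e: "0 < ereal \<epsilon>" "ereal \<epsilon> < a" using ereal_dense2 by blast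
    obtain m where m: "m \<ge> 1" "ln (real (card (itineraries X N (A \<mu>0) (f \<mu>0) m))) / real m \<le> \<epsilon>"
      using zero_growth[OF pw0 assms(1,3,4,10), of \<epsilon>] e by auto
    obtain d where d: "d > 0" "\<forall>\<mu>\<in>U \<inter> ball \<mu>0 d. itineraries X N (A \<mu>) (f \<mu>) m = itineraries X N (A \<mu>0) (f \<mu>0) m"
      using assms(9) m(1) unfolding stable_at_def by blast
    have "eventually (\<lambda>\<delta>. \<delta> \<in> {0<..<d}) (at_right (0::real))"
      by (rule eventually_at_right_real[OF d(1)])
    then show "eventually (\<lambda>\<delta>. L \<delta> < a) (at_right 0)"
    proof (rule eventually_mono)
      fix \<delta> :: real assume "\<delta> \<in> {0<..<d}"
      then have "\<forall>\<mu>\<in>U \<inter> ball \<mu>0 \<delta>. itineraries X N (A \<mu>) (f \<mu>) m = itineraries X N (A \<mu>0) (f \<mu>0) m"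
        using d(2) by auto
      then have "L \<delta> \<le> ereal (ln (real (card (itineraries X N (A \<mu>0) (f \<mu>0) m))) / real m)"
        unfolding L_def by (rule L_bound[OF pw _ m(1)])
      also have "\<dots> \<le> ereal \<epsilon>" using m(2) by simp
      also have "\<dots> < a" by (rule e(2))
      finally show "L \<delta> < a" .
    qed
  qed
  then show ?thesis unfolding hypothesis_E_def L_def .
qed

end
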